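(* For every metric space $X$, either $h_\infty(X)=0$ or $h_\infty(X)=\infty$. Consequently the coarse entropy of any isometric embedding $f\colon X\to X$ is either $0$ or $\infty$.
   Context: For a map $f\colon X\to X$ on a metric space $(X,d)$, $\delta>0$, $n\in\mathbb N$, $x_0\in X$: a $\delta$-pseudoorbit of $f$ of length $n$ from $x_0$ is $(x_0,\dots,x_n)$ with $d(f(x_i),x_{i+1})\le\delta$ for all $i<n$; $P(f,n,\delta,x_0)$ is the set of these with distance $\max_i d(x_i,y_i)$; $s(f,n,R,\delta,x_0)$ is the supremum of cardinalities of $R$-separated subsets (distinct elements at distance $\ge R$) of $P(f,n,\delta,x_0)$; $h_\infty(f)=\lim_{\delta\to\infty}\lim_{R\to\infty}\limsup_{n\to\infty}\frac1n\log s(f,n,R,\delta,x_0)\in[0,\infty]$, independent of $x_0$. The coarse entropy of the space is $h_\infty(X)=h_\infty(\mathrm{id}_X)$, which equals $h_\infty(f)$ for every isometric embedding $f\colon X\to X$. *)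

theory Defs
  imports "HOL-Analysis.Analysis"
begin

definition pseudoorbits :: "('a::metric_space \<Rightarrow> 'a) \<Rightarrow> nat \<Rightarrow> real \<Rightarrow> 'a \<Rightarrow> 'a list set" where
  "pseudoorbits f n \<delta> x0 =
     {xs. length xs = Suc n \<and> xs ! 0 = x0 \<and> (\<forall>i<n. dist (f (xs ! i)) (xs ! Suc i) \<le> \<delta>)}"

definition orbit_dist :: "'a::metric_space list \<Rightarrow> 'a list \<Rightarrow> real" where
  "orbit_dist xs ys = Max {dist (xs ! i) (ys ! i) | i. i < length xs}"

definition separated :: "real \<Rightarrow> 'a::metric_space list set \<Rightarrow> bool" where
  "separated R S \<longleftrightarrow> (\<forall>x\<in>S. \<forall>y\<in>S. x \<noteq> y \<longrightarrow> orbit_dist x y \<ge> R)"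

text \<open>supremum of cardinalities of R-separated subsets of P(f,n,delta,x0), in [0,infinity].
  (Infinite separated sets are accounted for by their finite subsets.)\<close>
definition sep_num :: "('a::metric_space \<Rightarrow> 'a) \<Rightarrow> nat \<Rightarrow> real \<Rightarrow> real \<Rightarrow> 'a \<Rightarrow> ereal" where
  "sep_num f n R \<delta> x0 =
     (SUP S \<in> {S. finite S \<and> S \<subseteq> pseudoorbits f n \<delta> x0 \<and> separated R S}. ereal (real (card S)))"

definition ln_ereal :: "ereal \<Rightarrow> ereal" where
  "ln_ereal x = (if x = \<infinity> then \<infinity> else ereal (ln (real_of_ereal x)))"

definition coarse_entropy :: "('a::metric_space \<Rightarrow> 'a) \<Rightarrow> 'a \<Rightarrow> ereal" where
  "coarse_entropy f x0 =
     Lim at_top (\<lambda>\<delta>::real. Lim at_top (\<lambda>R::real.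
        limsup (\<lambda>n::nat. ereal (1 / real n) * ln_ereal (sep_num f n R \<delta> x0))))"

definition space_coarse_entropy :: "'a::metric_space \<Rightarrow> ereal" where
  "space_coarse_entropy x0 = coarse_entropy id x0"

end

theory Submission imports Defs begin

lemma Lim_mono_Sup:
  fixes g :: "real \<Rightarrow> ereal" assumes "mono g" shows "Lim at_top g = (SUP x. g x)"
proof (rule tendsto_Lim)
  show "\<not> trivial_limit (at_top::real filter)" by simp
  show "(g \<longlongrightarrow> (SUP x. g x)) at_top"
  proof (rule increasing_tendsto)
    show "\<forall>\<^sub>F n in at_top. g n \<le> (SUP x. g x)" by (intro always_eventually) (auto intro: SUP_upper)
    fix y assume "y < (SUP x. g x)"
    then obtain x where "y < g x" by (auto simp: less_SUP_iff)
    then have yx: "y < g x" .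
    have "\<forall>\<^sub>F n in at_top. x \<le> n" by (rule eventually_ge_at_top)
    then show "\<forall>\<^sub>F n in at_top. y < g n"
      by (rule eventually_mono) (meson yx assms monoD less_le_trans)
  qed
qed

lemma Lim_antimono_Inf:
  fixes g :: "real \<Rightarrow> ereal" assumes "antimono g" shows "Lim at_top g = (INF x. g x)"
proof (rule tendsto_Lim)
  show "\<not> trivial_limit (at_top::real filter)" by simp
  show "(g \<longlongrightarrow> (INF x. g x)) at_top"
  proof (rule decreasing_tendsto)
    show "\<forall>\<^sub>F n in at_top. (INF x. g x) \<le> g n" by (intro always_eventually) (auto intro: INF_lower)
    fix y assume "(INF x. g x) < y"
    then obtain x where "g x < y" by (auto simp: INF_less_iff)
    then have yx: "g x < y" .
    have "\<forall>\<^sub>F n in at_top. x \<le> n" by (rule eventually_ge_at_top)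
    then show "\<forall>\<^sub>F n in at_top. g n < y"
      by (rule eventually_mono) (meson yx assms antimonoD le_less_trans)
  qed
qed

lemma orbit_dist_ge_iff:
  assumes "0 < length xs"
  shows "(R \<le> orbit_dist xs ys) = (\<exists>i<length xs. R \<le> dist (xs!i) (ys!i))"
proof -
  have eq: "{dist (xs ! i) (ys ! i) | i. i < length xs} = (\<lambda>i. dist (xs ! i) (ys ! i)) ` {..<length xs}"
    by auto
  show ?thesis unfolding orbit_dist_def eq
    using assms by (subst Max_ge_iff) auto
qed

lemma pseudoorbits_length: "xs \<in> pseudoorbits f n \<delta> x0 \<Longrightarrow> length xs = Suc n"
  by (simp add: pseudoorbits_def)

lemma sep_num_le_map:
  assumes map: "\<And>x. x \<in> pseudoorbits f n \<delta> x0 \<Longrightarrow> g x \<in> pseudoorbits f' n' \<delta>' x0'"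
  and sep: "\<And>x y. x \<in> pseudoorbits f n \<delta> x0 \<Longrightarrow> y \<in> pseudoorbits f n \<delta> x0 \<Longrightarrow> x \<noteq> y \<Longrightarrow>
       R \<le> orbit_dist x y \<Longrightarrow> g x \<noteq> g y \<and> R' \<le> orbit_dist (g x) (g y)"
  shows "sep_num f n R \<delta> x0 \<le> sep_num f' n' R' \<delta>' x0'"
  unfolding sep_num_def
proof (rule SUP_least)
  fix S assume "S \<in> {S. finite S \<and> S \<subseteq> pseudoorbits f n \<delta> x0 \<and> separated R S}"
  then have S: "finite S" "S \<subseteq> pseudoorbits f n \<delta> x0" "separated R S" by auto
  have inj: "inj_on g S"
  proof (rule inj_onI, rule ccontr)
    fix x y assume "x \<in> S" "y \<in> S" "g x = g y" "x \<noteq> y"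
    then show False using S sep[of x y] unfolding separated_def by auto
  qed
  have "separated R' (g ` S)"
    unfolding separated_def
  proof (intro ballI impI)
    fix a b assume "a \<in> g ` S" "b \<in> g ` S" "a \<noteq> b"
    then obtain x y where xy: "x \<in> S" "y \<in> S" "a = g x" "b = g y" by auto
    with \<open>a \<noteq> b\<close> have "x \<noteq> y" by auto
    with xy S(3) have "R \<le> orbit_dist x y" unfolding separated_def by auto
    then show "R' \<le> orbit_dist a b" using sep[of x y] xy S(2) \<open>x \<noteq> y\<close> by auto
  qed
  moreover have "g ` S \<subseteq> pseudoorbits f' n' \<delta>' x0'" using S(2) map by auto
  ultimately have gS: "g ` S \<in> {S. finite S \<and> S \<subseteq> pseudoorbits f' n' \<delta>' x0' \<and> separated R' S}"
    using S(1) by auto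
  have "card (g ` S) = card S" using inj by (rule card_image)
  then show "ereal (real (card S)) \<le> (SUP S\<in>{S. finite S \<and> S \<subseteq> pseudoorbits f' n' \<delta>' x0' \<and> separated R' S}. ereal (real (card S)))"
    using SUP_upper[OF gS, of "\<lambda>S. ereal (real (card S))"] by simp
qed

lemma sep_num_anti_R: "R \<le> R' \<Longrightarrow> sep_num f n R' \<delta> x0 \<le> sep_num f n R \<delta> x0"
  by (rule sep_num_le_map[where g=id]) auto

lemma sep_num_mono_delta: "\<delta> \<le> \<delta>' \<Longrightarrow> sep_num f n R \<delta> x0 \<le> sep_num f n R \<delta>' x0"
  by (rule sep_num_le_map[where g=id]) (auto simp: pseudoorbits_def)

definition ok :: "ereal \<Rightarrow> bool" where "ok x \<longleftrightarrow> x = 0 \<or> 1 \<le> x"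

lemma sep_num_ok: "ok (sep_num f n R \<delta> x0)"
proof (cases "\<exists>S. finite S \<and> S \<subseteq> pseudoorbits f n \<delta> x0 \<and> separated R S \<and> 1 \<le> card S")
  case True
  then obtain S where S: "finite S \<and> S \<subseteq> pseudoorbits f n \<delta> x0 \<and> separated R S" "1 \<le> card S" by blast
  have "ereal 1 \<le> ereal (real (card S))" using S(2) by simp
  also have "\<dots> \<le> sep_num f n R \<delta> x0" unfolding sep_num_def
    using S(1) by (intro SUP_upper) auto
  finally show ?thesis by (simp add: ok_def one_ereal_def)
next
  case False
  have "sep_num f n R \<delta> x0 \<le> 0" unfolding sep_num_def
    using False by (intro SUP_least) (auto simp: not_le)
  moreover have "0 \<le> sep_num f n R \<delta> x0" unfolding sep_num_def
    by (rule SUP_upper2[where i="{}"]) (auto simp: separated_def)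
  ultimately show ?thesis by (simp add: ok_def)
qed

lemma ln_ereal_nonneg: "ok x \<Longrightarrow> 0 \<le> ln_ereal x"
  by (cases x) (auto simp: ok_def ln_ereal_def)

lemma ln_ereal_mono: "ok x \<Longrightarrow> ok y \<Longrightarrow> x \<le> y \<Longrightarrow> ln_ereal x \<le> ln_ereal y"
  by (cases x; cases y) (auto simp: ok_def ln_ereal_def)

definition LL :: "('a::metric_space \<Rightarrow> 'a) \<Rightarrow> 'a \<Rightarrow> real \<Rightarrow> real \<Rightarrow> ereal" where
  "LL f x0 R \<delta> = limsup (\<lambda>n::nat. ereal (1 / real n) * ln_ereal (sep_num f n R \<delta> x0))"

lemma LL_nonneg: "0 \<le> LL f x0 R \<delta>"
  unfolding LL_def
  by (intro le_Limsup always_eventually allI) (auto intro!: ereal_0_le_mult ln_ereal_nonneg sep_num_ok)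

lemma LL_anti_R: "R \<le> R' \<Longrightarrow> LL f x0 R' \<delta> \<le> LL f x0 R \<delta>"
  unfolding LL_def
  by (intro Limsup_mono always_eventually allI ereal_mult_left_mono ln_ereal_mono sep_num_ok sep_num_anti_R) auto

lemma LL_mono_delta: "\<delta> \<le> \<delta>' \<Longrightarrow> LL f x0 R \<delta> \<le> LL f x0 R \<delta>'"
  unfolding LL_def
  by (intro Limsup_mono always_eventually allI ereal_mult_left_mono ln_ereal_mono sep_num_ok sep_num_mono_delta) auto

definition HH :: "('a::metric_space \<Rightarrow> 'a) \<Rightarrow> 'a \<Rightarrow> real \<Rightarrow> ereal" where
  "HH f x0 \<delta> = (INF R. LL f x0 R \<delta>)"

lemma HH_mono: "\<delta> \<le> \<delta>' \<Longrightarrow> HH f x0 \<delta> \<le> HH f x0 \<delta>'"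
  unfolding HH_def by (intro INF_mono) (auto intro: LL_mono_delta)

lemma HH_nonneg: "0 \<le> HH f x0 \<delta>"
  unfolding HH_def by (intro INF_greatest LL_nonneg)

lemma coarse_entropy_eq: "coarse_entropy f x0 = (SUP \<delta>. HH f x0 \<delta>)"
proof -
  have "(\<lambda>\<delta>. Lim at_top (\<lambda>R. LL f x0 R \<delta>)) = HH f x0"
    by (rule ext, unfold HH_def, rule Lim_antimono_Inf) (auto simp: antimono_def intro: LL_anti_R)
  then have "coarse_entropy f x0 = Lim at_top (HH f x0)"
    unfolding coarse_entropy_def LL_def by simp
  also have "\<dots> = (SUP \<delta>. HH f x0 \<delta>)"
    by (rule Lim_mono_Sup) (auto simp: mono_def intro: HH_mono)
  finally show ?thesis .
qed

lemma limsup_transfer: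
  fixes g g' :: "nat \<Rightarrow> ereal" and \<phi> :: "nat \<Rightarrow> nat" and c d :: real
  assumes g'0: "\<And>n. 0 \<le> g' n" and le: "\<And>m. g m \<le> g' (\<phi> m)"
    and phi: "filterlim \<phi> at_top sequentially"
    and bd: "\<And>m. real (\<phi> m) \<le> c * real m + d" and c: "0 < c"
  shows "limsup (\<lambda>m. ereal (1/real m) * g m) \<le> ereal c * limsup (\<lambda>n. ereal (1/real n) * g' n)"
proof -
  let ?L = "limsup (\<lambda>n. ereal (1/real n) * g' n)"
  let ?X = "limsup (\<lambda>m. ereal (1/real m) * g m)"
  have L0: "0 \<le> ?L" by (intro le_Limsup always_eventually allI) (auto intro!: ereal_0_le_mult g'0)
  show ?thesis
  proof (cases ?L)
    case PInf then show ?thesis using c by simp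
  next
    case MInf then show ?thesis using L0 by simp
  next
    case (real l)
    have l0: "0 \<le> l" using L0 real by simp
    have key: "?X \<le> ereal (c*y)" if y: "l < y" for y
    proof -
      define y' where "y' = (l+y)/2"
      have y': "l < y'" "y' < y" "0 < y'" using y l0 by (auto simp: y'_def)
      have "\<forall>\<^sub>F n in sequentially. ereal (1/real n) * g' n < ereal y'"
        using y' real by (intro Limsup_lessD) simp
      then obtain N where N: "\<And>n. n \<ge> N \<Longrightarrow> ereal (1/real n) * g' n < ereal y'"
        by (auto simp: eventually_sequentially)
      have g'b: "g' n \<le> ereal (real n * y')" if "n \<ge> max N 1" for n
      proof -
        have n: "n \<ge> N" "n \<ge> 1" using that by auto
        have *: "ereal (1/real n) * g' n < ereal y'" using N n by auto
        show ?thesis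
        proof (cases "g' n")
          case PInf with * n show ?thesis by simp
        next
          case MInf with g'0[of n] show ?thesis by simp
        next
          case (real t)
          with * have "t / real n < y'" by simp
          then have "t < real n * y'" using n by (simp add: field_simps)
          then show ?thesis using real by simp
        qed
      qed
      have ev1: "\<forall>\<^sub>F m in sequentially. max N 1 \<le> \<phi> m" using phi unfolding filterlim_at_top by blast
      obtain M :: nat where M: "d*y' / (c*(y - y')) \<le> real M" by (meson real_arch_simple)
      have ev2: "\<forall>\<^sub>F m in sequentially. max M 1 \<le> m" by (rule eventually_ge_at_top)
      have "\<forall>\<^sub>F m in sequentially. ereal (1/real m) * g m \<le> ereal (c*y)"
        using ev1 ev2
      proof eventually_elim
        case (elim m)
        have m1: "m \<ge> 1" "d*y'/(c*(y-y')) \<le> real m" using elim M by auto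
        have "ereal (1/real m) * g m \<le> ereal (1/real m) * g' (\<phi> m)"
          by (rule ereal_mult_left_mono) (auto simp: le)
        also have "\<dots> \<le> ereal (1/real m) * ereal (real (\<phi> m) * y')"
          by (rule ereal_mult_left_mono) (use g'b elim in auto)
        also have "\<dots> = ereal (real (\<phi> m) * y' / real m)" by simp
        also have "\<dots> \<le> ereal (c*y)"
        proof -
          have "real (\<phi> m) * y' \<le> (c * real m + d) * y'"
            using bd[of m] y' by (intro mult_right_mono) auto
          also have "\<dots> \<le> c*y*real m"
          proof -
            have "d*y' \<le> real m * (c*(y-y'))"
              using m1(2) y' c by (simp add: divide_le_eq mult.commute)
            then show ?thesis by (simp add: algebra_simps)
          qed
          finally have "real (\<phi> m) * y' \<le> c*y*real m" .
          then show ?thesis using m1 by (simp add: divide_le_eq)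
        qed
        finally show ?case .
      qed
      then show ?thesis by (rule Limsup_bounded)
    qed
    show ?thesis
    proof (cases ?X)
      case PInf
      with key[of "l+1"] show ?thesis by simp
    next
      case MInf then show ?thesis by simp
    next
      case (real x)
      show ?thesis
      proof (rule ccontr)
        assume "\<not> ?thesis"
        then have xl: "c*l < x" using real \<open>?L = ereal l\<close> by simp
        define y where "y = (x/c + l)/2"
        have "l < y" using xl c by (simp add: y_def field_simps)
        moreover have "c*y < x" using xl c by (simp add: y_def field_simps)
        ultimately show False using key[of y] real by simp
      qed
    qed
  qed
qed

lemma id_chain:
  assumes xs: "xs \<in> pseudoorbits id n \<delta> x0" and ab: "a \<le> b" and bn: "b \<le> n"
  shows "dist (xs!a) (xs!b) \<le> real (b-a) * \<delta>"
  using ab bn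
proof (induction b rule: dec_induct)
  case base then show ?case by simp
next
  case (step b)
  have "dist (xs!a) (xs!Suc b) \<le> dist (xs!a) (xs!b) + dist (xs!b) (xs!Suc b)"
    by (rule dist_triangle)
  also have "dist (xs!b) (xs!Suc b) \<le> \<delta>" using xs step by (auto simp: pseudoorbits_def)
  finally show ?case using step by (simp add: Suc_diff_le algebra_simps)
qed

lemma sep_num_scale:
  fixes x0 :: "'a::metric_space"
  assumes d: "0 < \<delta>" and k: "1 \<le> k" and R': "0 < R'"
  shows "sep_num id m (R' + 2*real k*\<delta>) \<delta> x0 \<le> sep_num id (m div k + 1) R' (real k*\<delta>) x0"
proof (rule sep_num_le_map[where g="\<lambda>xs. map (\<lambda>j. xs ! min (k*j) m) [0..<m div k + 2]"])
  fix xs assume xs: "xs \<in> pseudoorbits id m \<delta> x0"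
  show "map (\<lambda>j. xs ! min (k*j) m) [0..<m div k + 2] \<in> pseudoorbits id (m div k + 1) (real k*\<delta>) x0"
    unfolding pseudoorbits_def
  proof (intro CollectI conjI allI impI)
    show "length (map (\<lambda>j. xs ! min (k*j) m) [0..<m div k + 2]) = Suc (m div k + 1)" by simp
    show "map (\<lambda>j. xs ! min (k*j) m) [0..<m div k + 2] ! 0 = x0"
      using xs by (simp add: pseudoorbits_def nth_append)
    fix i assume i: "i < m div k + 1"
    let ?a = "min (k*i) m" and ?b = "min (k*Suc i) m"
    have ab: "?a \<le> ?b" "?b \<le> m" "?b - ?a \<le> k" by (auto simp: min_def)
    have "dist (xs ! ?a) (xs ! ?b) \<le> real (?b - ?a) * \<delta>" by (rule id_chain[OF xs ab(1,2)])
    also have "\<dots> \<le> real k * \<delta>" using ab(3) d by (intro mult_right_mono) auto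
    finally show "dist (id (map (\<lambda>j. xs ! min (k*j) m) [0..<m div k + 2] ! i))
          (map (\<lambda>j. xs ! min (k*j) m) [0..<m div k + 2] ! Suc i) \<le> real k * \<delta>"
      using i by (simp del: upt_Suc)
  qed
next
  fix x y assume x: "x \<in> pseudoorbits id m \<delta> x0" and y: "y \<in> pseudoorbits id m \<delta> x0"
    and "x \<noteq> y" and sep: "R' + 2*real k*\<delta> \<le> orbit_dist x y"
  have lx: "length x = Suc m" and ly: "length y = Suc m" using x y by (auto simp: pseudoorbits_def)
  obtain i where i: "i < Suc m" "R' + 2*real k*\<delta> \<le> dist (x!i) (y!i)"
    using sep lx orbit_dist_ge_iff[of x "R' + 2*real k*\<delta>" y] by auto
  define j where "j = i div k"
  have kj: "k*j \<le> i" "i - k*j \<le> k" using k unfolding j_def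
    by (auto simp: minus_mod_eq_mult_div[symmetric] intro: less_imp_le)
  have minkj: "min (k*j) m = k*j" using kj i by auto
  have jlt: "j < m div k + 2" proof -
    have "i div k \<le> m div k" using i by (simp add: div_le_mono)
    then show ?thesis unfolding j_def by simp
  qed
  have cx: "dist (x!(k*j)) (x!i) \<le> real k * \<delta>"
    using id_chain[OF x kj(1)] i kj(2) d by (smt (verit) less_Suc_eq_le mult_right_mono of_nat_le_iff)
  have cy: "dist (y!(k*j)) (y!i) \<le> real k * \<delta>"
    using id_chain[OF y kj(1)] i kj(2) d by (smt (verit) less_Suc_eq_le mult_right_mono of_nat_le_iff)
  have t1: "dist (x!i) (y!i) \<le> dist (x!i) (x!(k*j)) + dist (x!(k*j)) (y!i)" by (rule dist_triangle)
  have t2: "dist (x!(k*j)) (y!i) \<le> dist (x!(k*j)) (y!(k*j)) + dist (y!(k*j)) (y!i)" by (rule dist_triangle)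
  have t3: "dist (x!i) (x!(k*j)) = dist (x!(k*j)) (x!i)" by (rule dist_commute)
  have D: "R' \<le> dist (x!(k*j)) (y!(k*j))" using i t1 t2 t3 cx cy by linarith
  let ?gx = "map (\<lambda>j. x ! min (k*j) m) [0..<m div k + 2]"
  let ?gy = "map (\<lambda>j. y ! min (k*j) m) [0..<m div k + 2]"
  have gj: "?gx ! j = x!(k*j)" "?gy ! j = y!(k*j)" using jlt minkj by (simp_all del: upt_Suc)
  show "?gx \<noteq> ?gy \<and> R' \<le> orbit_dist ?gx ?gy"
  proof
    show "?gx \<noteq> ?gy" using gj D R' by (metis dist_self not_le)
    show "R' \<le> orbit_dist ?gx ?gy"
      using gj D jlt by (subst orbit_dist_ge_iff) (auto simp del: upt_Suc)
  qed
qed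

lemma iso_pow:
  fixes f :: "'a::metric_space \<Rightarrow> 'a"
  assumes iso: "\<forall>x y. dist (f x) (f y) = dist x y"
  shows "dist ((f^^k) a) ((f^^k) b) = dist a b"
  using iso by (induction k) auto

lemma list_neq_ex: "length x = length y \<Longrightarrow> x \<noteq> y \<Longrightarrow> \<exists>i<length x. x!i \<noteq> y!i"
  using nth_equalityI by blast

lemma sep_num_iso_lower:
  fixes f :: "'a::metric_space \<Rightarrow> 'a"
  assumes iso: "\<forall>x y. dist (f x) (f y) = dist x y"
  shows "sep_num id n R \<delta> x0 \<le> sep_num f n R \<delta> x0"
proof (rule sep_num_le_map[where g="\<lambda>ys. map (\<lambda>i. (f^^i) (ys!i)) [0..<Suc n]"])
  fix ys assume ys: "ys \<in> pseudoorbits id n \<delta> x0"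
  show "map (\<lambda>i. (f^^i) (ys!i)) [0..<Suc n] \<in> pseudoorbits f n \<delta> x0"
    unfolding pseudoorbits_def
  proof (intro CollectI conjI allI impI)
    show "length (map (\<lambda>i. (f^^i) (ys!i)) [0..<Suc n]) = Suc n" by simp
    show "map (\<lambda>i. (f^^i) (ys!i)) [0..<Suc n] ! 0 = x0"
      using ys by (simp add: pseudoorbits_def nth_append del: upt_Suc)
    fix i assume i: "i < n"
    have "dist (f ((f^^i) (ys!i))) ((f^^Suc i) (ys!Suc i)) = dist (ys!i) (ys!Suc i)"
      using iso_pow[OF iso, of "Suc i"] by simp
    also have "\<dots> \<le> \<delta>" using ys i by (auto simp: pseudoorbits_def)
    finally show "dist (f (map (\<lambda>i. (f^^i) (ys!i)) [0..<Suc n] ! i))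
        (map (\<lambda>i. (f^^i) (ys!i)) [0..<Suc n] ! Suc i) \<le> \<delta>"
      using i by (simp del: upt_Suc funpow.simps)
  qed
next
  fix x y assume x: "x \<in> pseudoorbits id n \<delta> x0" and y: "y \<in> pseudoorbits id n \<delta> x0"
    and xy: "x \<noteq> y" and sep: "R \<le> orbit_dist x y"
  have lx: "length x = Suc n" and ly: "length y = Suc n" using x y by (auto simp: pseudoorbits_def)
  let ?gx = "map (\<lambda>i. (f^^i) (x!i)) [0..<Suc n]"
  let ?gy = "map (\<lambda>i. (f^^i) (y!i)) [0..<Suc n]"
  have gi: "dist (?gx!i) (?gy!i) = dist (x!i) (y!i)" if "i < Suc n" for i
    using that iso_pow[OF iso] by (simp del: upt_Suc)
  show "?gx \<noteq> ?gy \<and> R \<le> orbit_dist ?gx ?gy"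
  proof
    obtain i where i: "i < Suc n" "x!i \<noteq> y!i" using list_neq_ex[of x y] lx ly xy by auto
    then have "dist (?gx!i) (?gy!i) \<noteq> 0" using gi by simp
    then show "?gx \<noteq> ?gy" by (metis dist_self)
    obtain i where i: "i < Suc n" "R \<le> dist (x!i) (y!i)"
      using sep lx orbit_dist_ge_iff[of x R y] by auto
    then show "R \<le> orbit_dist ?gx ?gy"
      using gi by (subst orbit_dist_ge_iff) (auto simp del: upt_Suc intro!: exI[of _ i])
  qed
qed

lemma sep_num_iso_upper:
  fixes f :: "'a::metric_space \<Rightarrow> 'a"
  assumes iso: "\<forall>x y. dist (f x) (f y) = dist x y"
  shows "sep_num f N R \<delta> x0 \<le> sep_num id (2*N) R (max \<delta> (dist x0 (f x0))) x0"
proof (rule sep_num_le_map[where g="\<lambda>xs. map (\<lambda>i. if i < N then (f^^i) x0 else (f^^(2*N - i)) (xs ! (i - N))) [0..<Suc (2*N)]"])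
  fix xs assume xs: "xs \<in> pseudoorbits f N \<delta> x0"
  let ?h = "\<lambda>i. if i < N then (f^^i) x0 else (f^^(2*N - i)) (xs ! (i - N))"
  have x0: "xs!0 = x0" using xs by (simp add: pseudoorbits_def)
  show "map ?h [0..<Suc (2*N)] \<in> pseudoorbits id (2*N) (max \<delta> (dist x0 (f x0))) x0"
    unfolding pseudoorbits_def
  proof (intro CollectI conjI allI impI)
    show "length (map ?h [0..<Suc (2*N)]) = Suc (2*N)" by simp
    show "map ?h [0..<Suc (2*N)] ! 0 = x0"
      using x0 by (simp add: nth_append del: upt_Suc)
    fix i assume i: "i < 2*N"
    have "dist (?h i) (?h (Suc i)) \<le> max \<delta> (dist x0 (f x0))"
    proof (cases "Suc i < N")
      case True
      have "dist ((f^^i) x0) ((f^^Suc i) x0) = dist ((f^^i) x0) ((f^^i) (f x0))"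
        by (simp add: funpow_Suc_right del: funpow.simps)
      also have "\<dots> = dist x0 (f x0)" by (rule iso_pow[OF iso])
      finally show ?thesis using True by simp
    next
      case False
      show ?thesis
      proof (cases "Suc i = N")
        case True
        have "dist ((f^^i) x0) ((f^^Suc i) x0) = dist ((f^^i) x0) ((f^^i) (f x0))"
          by (simp add: funpow_Suc_right del: funpow.simps)
        also have "\<dots> = dist x0 (f x0)" by (rule iso_pow[OF iso])
        finally have "dist ((f^^i) x0) ((f^^N) (xs!0)) = dist x0 (f x0)" using True x0 by simp
        moreover have "?h i = (f^^i) x0" "?h (Suc i) = (f^^N) (xs!0)" using True by auto
        ultimately show ?thesis by simp
      next
        case False2: False
        with False have iN: "N \<le> i" by simp
        define j where "j = i - N"
        define m where "m = 2*N - Suc i"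
        have j: "j < N" using i iN by (simp add: j_def)
        have e0: "2*N - i = Suc m" using i iN by (simp add: m_def)
        have e1: "?h i = (f^^m) (f (xs!j))"
          using iN by (simp add: e0 j_def funpow_Suc_right del: funpow.simps)
        have e2: "?h (Suc i) = (f^^m) (xs!Suc j)"
          using iN i by (simp add: j_def m_def Suc_diff_le)
        have "dist (?h i) (?h (Suc i)) = dist (f (xs!j)) (xs!Suc j)"
          unfolding e1 e2 by (rule iso_pow[OF iso])
        also have "\<dots> \<le> \<delta>" using xs j by (auto simp: pseudoorbits_def)
        finally show ?thesis by simp
      qed
    qed
    moreover have A: "map ?h [0..<Suc (2*N)] ! i = ?h i" using i by (simp del: upt_Suc)
    moreover have B: "map ?h [0..<Suc (2*N)] ! Suc i = ?h (Suc i)" using i by (simp del: upt_Suc)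
    ultimately show "dist (id (map ?h [0..<Suc (2*N)] ! i)) (map ?h [0..<Suc (2*N)] ! Suc i)
       \<le> max \<delta> (dist x0 (f x0))"
      by (simp only: id_apply)
  qed
next
  fix x y assume x: "x \<in> pseudoorbits f N \<delta> x0" and y: "y \<in> pseudoorbits f N \<delta> x0"
    and xy: "x \<noteq> y" and sep: "R \<le> orbit_dist x y"
  have lx: "length x = Suc N" and ly: "length y = Suc N" using x y by (auto simp: pseudoorbits_def)
  let ?gx = "map (\<lambda>i. if i < N then (f^^i) x0 else (f^^(2*N - i)) (x ! (i - N))) [0..<Suc (2*N)]"
  let ?gy = "map (\<lambda>i. if i < N then (f^^i) x0 else (f^^(2*N - i)) (y ! (i - N))) [0..<Suc (2*N)]"
  have gi: "dist (?gx!(N+j)) (?gy!(N+j)) = dist (x!j) (y!j)" if "j < Suc N" for j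
    using that iso_pow[OF iso] by (simp del: upt_Suc)
  show "?gx \<noteq> ?gy \<and> R \<le> orbit_dist ?gx ?gy"
  proof
    obtain j where j: "j < Suc N" "x!j \<noteq> y!j" using list_neq_ex[of x y] lx ly xy by auto
    then have ne: "dist (?gx!(N+j)) (?gy!(N+j)) \<noteq> 0" using gi by simp
    show "?gx \<noteq> ?gy"
    proof
      assume eq: "?gx = ?gy"
      have "dist (?gx!(N+j)) (?gy!(N+j)) = 0" unfolding eq by (rule dist_self)
      with ne show False by contradiction
    qed
    obtain j where j: "j < Suc N" "R \<le> dist (x!j) (y!j)"
      using sep lx orbit_dist_ge_iff[of x R y] by auto
    have d: "R \<le> dist (?gx!(N+j)) (?gy!(N+j))" using gi[of j] j by simp
    have l: "N + j < length ?gx" using j by simp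
    have lp: "0 < length ?gx" by simp
    show "R \<le> orbit_dist ?gx ?gy"
      unfolding orbit_dist_ge_iff[OF lp] by (intro exI[of _ "N+j"] conjI l d)
  qed
qed

lemma LL_scale:
  fixes x0 :: "'a::metric_space"
  assumes d: "0 < \<delta>" and k: "1 \<le> k" and R': "0 < R'"
  shows "ereal (real k) * LL id x0 (R' + 2*real k*\<delta>) \<delta> \<le> LL id x0 R' (real k*\<delta>)"
proof -
  have kpos: "0 < real k" using k by simp
  have "LL id x0 (R' + 2*real k*\<delta>) \<delta> \<le> ereal (1/real k) * LL id x0 R' (real k*\<delta>)"
    unfolding LL_def
  proof (rule limsup_transfer[where \<phi>="\<lambda>m. m div k + 1" and d=1])
    show "\<And>n. 0 \<le> ln_ereal (sep_num id n R' (real k * \<delta>) x0)"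
      by (rule ln_ereal_nonneg[OF sep_num_ok])
    show "\<And>m. ln_ereal (sep_num id m (R' + 2 * real k * \<delta>) \<delta> x0)
         \<le> ln_ereal (sep_num id (m div k + 1) R' (real k * \<delta>) x0)"
      by (intro ln_ereal_mono sep_num_ok sep_num_scale d k R')
    show "filterlim (\<lambda>m. m div k + 1) at_top sequentially"
      unfolding filterlim_at_top
    proof
      fix Z :: nat
      have "\<forall>\<^sub>F m in sequentially. Z*k \<le> m" by (rule eventually_ge_at_top)
      then show "\<forall>\<^sub>F m in sequentially. Z \<le> m div k + 1"
        by (rule eventually_mono) (metis k div_le_mono nonzero_mult_div_cancel_right not_one_le_zero le_SucI Suc_eq_plus1)
    qed
    show "\<And>m. real (m div k + 1) \<le> 1 / real k * real m + 1"
      using of_nat_div_le_of_nat by (simp add: divide_inverse mult.commute)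
    show "0 < 1 / real k" using kpos by simp
  qed
  then have "ereal (real k) * LL id x0 (R' + 2*real k*\<delta>) \<delta> \<le> ereal (real k) * (ereal (1/real k) * LL id x0 R' (real k*\<delta>))"
    by (rule ereal_mult_left_mono) simp
  also have "\<dots> = LL id x0 R' (real k*\<delta>)"
    using kpos by (simp add: mult.assoc[symmetric])
  finally show ?thesis .
qed

lemma HH_scale:
  fixes x0 :: "'a::metric_space"
  assumes d: "0 < \<delta>" and k: "1 \<le> k"
  shows "ereal (real k) * HH id x0 \<delta> \<le> HH id x0 (real k*\<delta>)"
proof -
  have pos: "ereal (real k) * HH id x0 \<delta> \<le> LL id x0 R' (real k*\<delta>)" if R': "0 < R'" for R'
  proof -
    have "ereal (real k) * HH id x0 \<delta> \<le> ereal (real k) * LL id x0 (R' + 2*real k*\<delta>) \<delta>"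
      unfolding HH_def by (intro ereal_mult_left_mono INF_lower) auto
    also have "\<dots> \<le> LL id x0 R' (real k*\<delta>)" by (rule LL_scale[OF d k R'])
    finally show ?thesis .
  qed
  show ?thesis unfolding HH_def[of id x0 "real k*\<delta>"]
  proof (rule INF_greatest)
    fix R' :: real
    show "ereal (real k) * HH id x0 \<delta> \<le> LL id x0 R' (real k*\<delta>)"
    proof (cases "0 < R'")
      case True then show ?thesis by (rule pos)
    next
      case False
      have "ereal (real k) * HH id x0 \<delta> \<le> LL id x0 1 (real k*\<delta>)" by (rule pos) simp
      also have "\<dots> \<le> LL id x0 R' (real k*\<delta>)" using False by (intro LL_anti_R) simp
      finally show ?thesis .
    qed
  qed
qed

lemma id_dichotomy:
  fixes x0 :: "'a::metric_space"
  shows "coarse_entropy id x0 = 0 \<or> coarse_entropy id x0 = \<infinity>"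
proof (cases "\<exists>\<delta>>0. 0 < HH id x0 \<delta>")
  case True
  then obtain \<delta> where d: "0 < \<delta>" "0 < HH id x0 \<delta>" by auto
  have ge: "ereal (real k) * HH id x0 \<delta> \<le> coarse_entropy id x0" if "1 \<le> k" for k
  proof -
    have "ereal (real k) * HH id x0 \<delta> \<le> HH id x0 (real k*\<delta>)" by (rule HH_scale[OF d(1) that])
    also have "\<dots> \<le> coarse_entropy id x0" unfolding coarse_entropy_eq by (rule SUP_upper) simp
    finally show ?thesis .
  qed
  have "coarse_entropy id x0 = \<infinity>"
  proof (rule ccontr)
    assume ninf: "coarse_entropy id x0 \<noteq> \<infinity>"
    have h0: "0 \<le> coarse_entropy id x0" unfolding coarse_entropy_eq
      by (rule SUP_upper2[where i=0]) (auto intro: HH_nonneg)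
    obtain H where H: "coarse_entropy id x0 = ereal H" using ninf h0 by (cases "coarse_entropy id x0") auto
    have "HH id x0 \<delta> \<le> coarse_entropy id x0" using ge[of 1] by simp
    then obtain r where r: "HH id x0 \<delta> = ereal r" "0 < r"
      using d(2) H by (cases "HH id x0 \<delta>") auto
    obtain k where kk: "H < real k * r" using ex_less_of_nat_mult[OF r(2)] by auto
    have "ereal (real (Suc k)) * HH id x0 \<delta> \<le> coarse_entropy id x0" by (rule ge) simp
    then have "real (Suc k) * r \<le> H" using H r by simp
    moreover have "real k * r \<le> real (Suc k) * r" using r by (intro mult_right_mono) auto
    ultimately show False using kk by simp
  qed
  then show ?thesis ..
next
  case False
  then have z: "HH id x0 \<delta> = 0" if "0 < \<delta>" for \<delta>
    using that HH_nonneg[of id x0 \<delta>] by (meson antisym not_less)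
  have "coarse_entropy id x0 \<le> 0" unfolding coarse_entropy_eq
  proof (rule SUP_least)
    fix \<delta> :: real
    have "HH id x0 \<delta> \<le> HH id x0 (max \<delta> 1)" by (rule HH_mono) simp
    also have "\<dots> = 0" by (rule z) simp
    finally show "HH id x0 \<delta> \<le> 0" .
  qed
  moreover have "0 \<le> coarse_entropy id x0" unfolding coarse_entropy_eq
    by (rule SUP_upper2[where i=0]) (auto intro: HH_nonneg)
  ultimately show ?thesis by simp
qed

lemma iso_dichotomy:
  fixes f :: "'a::metric_space \<Rightarrow> 'a" and x0 :: 'a
  assumes iso: "\<forall>x y. dist (f x) (f y) = dist x y"
  shows "coarse_entropy f x0 = 0 \<or> coarse_entropy f x0 = \<infinity>"
proof -
  define c where "c = dist x0 (f x0)"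
  have low: "LL id x0 R \<delta> \<le> LL f x0 R \<delta>" for R \<delta>
    unfolding LL_def
    by (intro Limsup_mono always_eventually allI ereal_mult_left_mono ln_ereal_mono sep_num_ok
        sep_num_iso_lower[OF iso]) auto
  have up: "LL f x0 R \<delta> \<le> ereal 2 * LL id x0 R (max \<delta> c)" for R \<delta>
    unfolding LL_def
  proof (rule limsup_transfer[where \<phi>="\<lambda>m. 2*m" and d=0])
    show "\<And>n. 0 \<le> ln_ereal (sep_num id n R (max \<delta> c) x0)"
      by (rule ln_ereal_nonneg[OF sep_num_ok])
    show "\<And>m. ln_ereal (sep_num f m R \<delta> x0) \<le> ln_ereal (sep_num id (2*m) R (max \<delta> c) x0)"
      unfolding c_def by (intro ln_ereal_mono sep_num_ok sep_num_iso_upper[OF iso])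
    show "filterlim (\<lambda>m::nat. 2*m) at_top sequentially"
      unfolding filterlim_at_top
    proof
      fix Z :: nat
      have "\<forall>\<^sub>F m in sequentially. Z \<le> m" by (rule eventually_ge_at_top)
      then show "\<forall>\<^sub>F m in sequentially. Z \<le> 2*m" by (rule eventually_mono) simp
    qed
  qed auto
  have HHlow: "HH id x0 \<delta> \<le> HH f x0 \<delta>" for \<delta>
    unfolding HH_def by (intro INF_mono) (auto intro: low)
  have hlow: "coarse_entropy id x0 \<le> coarse_entropy f x0"
    unfolding coarse_entropy_eq by (intro SUP_mono) (auto intro: HHlow)
  have h0: "0 \<le> coarse_entropy f x0" unfolding coarse_entropy_eq
    by (rule SUP_upper2[where i=0]) (auto intro: HH_nonneg)
  from id_dichotomy[of x0] show ?thesis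
  proof
    assume "coarse_entropy id x0 = \<infinity>"
    with hlow show ?thesis by simp
  next
    assume hz: "coarse_entropy id x0 = 0"
    have Hz: "HH id x0 \<delta> = 0" for \<delta>
    proof -
      have "HH id x0 \<delta> \<le> coarse_entropy id x0" unfolding coarse_entropy_eq by (rule SUP_upper) simp
      then show ?thesis using hz HH_nonneg[of id x0 \<delta>] by simp
    qed
    have Hf: "HH f x0 \<delta> = 0" for \<delta>
    proof -
      have eps: "HH f x0 \<delta> \<le> ereal (2*e)" if e: "0 < e" for e
      proof -
        have "(INF R. LL id x0 R (max \<delta> c)) < ereal e"
          using Hz[of "max \<delta> c"] e by (simp add: HH_def)
        then obtain R where R: "LL id x0 R (max \<delta> c) < ereal e" by (auto simp: INF_less_iff)
        have "HH f x0 \<delta> \<le> LL f x0 R \<delta>" unfolding HH_def by (rule INF_lower) simp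
        also have "\<dots> \<le> ereal 2 * LL id x0 R (max \<delta> c)" by (rule up)
        also have "\<dots> \<le> ereal 2 * ereal e" using R by (intro ereal_mult_left_mono) auto
        finally show ?thesis by simp
      qed
      have nn: "0 \<le> HH f x0 \<delta>" by (rule HH_nonneg)
      show ?thesis
      proof (cases "HH f x0 \<delta>")
        case PInf with eps[of 1] show ?thesis by simp
      next
        case MInf with nn show ?thesis by simp
      next
        case (real t)
        have "t \<le> 2*(t/4)" if "0 < t" using eps[of "t/4"] real that by simp
        then have "t \<le> 0" by (cases "0 < t") auto
        with real nn show ?thesis by simp
      qed
    qed
    show ?thesis unfolding coarse_entropy_eq Hf by simp
  qed
qed

theorem mainTheorem5:
  fixes x0 :: "'a::metric_space"
  shows "(space_coarse_entropy x0 = 0 \<or> space_coarse_entropy x0 = \<infinity>) \<and>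
         (\<forall>f::'a \<Rightarrow> 'a. (\<forall>x y. dist (f x) (f y) = dist x y) \<longrightarrow>
              coarse_entropy f x0 = 0 \<or> coarse_entropy f x0 = \<infinity>)"
  unfolding space_coarse_entropy_def using id_dichotomy iso_dichotomy by blast

end
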